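(* Let $0<\epsilon<1$ be fixed. Suppose that Assumption 2 holds and that at least one of Assumption 1.1 and Assumption 1.2 holds. Suppose moreover that for every $C\subseteq V$ with $|C|=r$, \[ \max_{\emptyset\ne D\subseteq C}\frac{\mathbb{E}_0[e(D)]\,h(\rho_C-1)}{|D|\log(n/|D|)}\le1-\epsilon . \] Then for all sufficiently large $n$, for every $C\subseteq V$ with $|C|=r$ and every $D\in\mathcal E_C$, there is a unique number $c_D\ge1$ such that \[ (1+\epsilon)\,\mathbb{E}_0[e(D)]\,h(c_D-1)=|D|\log\frac n{|D|}. \] Moreover, $\theta_{ij}(c_Dp_{ij})\le2\,\theta_{ij}(\rho_Cp_{ij})$ for all $i,j\in D$.
   Context: Setting. For each $n$ let $V=\{1,\dots,n\}$, let $p_{ij}=p_{ji}\in(0,1)$ ($i\ne j$) be edge probabilities, let $r=r_n$ be a community size, and for every $C\subseteq V$ with $|C|=r$ let $\rho_C>1$ with $\rho_Cp_{ij}\le1$ for $i,j\in C$. All may depend on $n$, and limits are as $n\to\infty$. Under $\mathbb{P}_0$ the adjacency entries $A_{ij}$ ($i<j$) of a random simple graph on $V$ are independent $\mathrm{Bern}(p_{ij})$, with expectation $\mathbb{E}_0$. Notation. $e(D)=\sum_{i<j,\ i,j\in D}A_{ij}$. $h(x)=(x+1)\log(x+1)-x$. For $|D|\ge2$, $\bar p_D=\mathbb{E}_0[e(D)]/\binom{|D|}2$. For $q\in(0,1)$, $\theta_{ij}(q)=\log\frac{q(1-p_{ij})}{p_{ij}(1-q)}$. With $b_n=\log\log(n/r)$,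 for $C$ with $|C|=r$ define \[ \mathcal E_C=\Big\{D\subseteq C:\ (\rho_C-1)^2\,\mathbb{E}_0[e(D)]>(1-\epsilon/2)\,|D|\Big(\log\frac{n|D|}{r^2}-b_n\Big)\Big\}. \] Assumption 1.1. There exists $\delta\in(0,1/2)$ with: (i) $r=O(n^{1/2-\delta})$; (ii) there exists $0<\gamma_n=o(1)$ such that $\max_{|C|=r}\max_{D\subseteq C,\,|D|<r/(n/r)^{\gamma_n}}\frac{|D|\bar p_D}{|C|\bar p_C}\le\delta$; (iii) $\max_{|C|=r}1/\bar p_C=o(r/\log(n/r))$. Assumption 1.2. (i) $r=n^{o(1)}$; (ii) $\max_{|C|=r}\log(1/\bar p_C)=o(\log(n/r)/\log r)$. Assumption 2. $\max_{|C|=r}\max_{i,j\in C}\rho_C^2p_{ij}\to0$. *)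

theory Defs
  imports Complex_Main
begin

text \<open>Vertex set V = {1..n}; edge probabilities p i j (for i \<noteq> j) at stage n.\<close>

definition expected_edges :: "(nat \<Rightarrow> nat \<Rightarrow> real) \<Rightarrow> nat set \<Rightarrow> real" where
  "expected_edges p D = (\<Sum>i\<in>D. \<Sum>j\<in>D. if i < j then p i j else 0)"

definition hfun :: "real \<Rightarrow> real" where
  "hfun x = (x + 1) * ln (x + 1) - x"

definition pbar :: "(nat \<Rightarrow> nat \<Rightarrow> real) \<Rightarrow> nat set \<Rightarrow> real" where
  "pbar p D = expected_edges p D / real (card D choose 2)"

definition theta :: "(nat \<Rightarrow> nat \<Rightarrow> real) \<Rightarrow> nat \<Rightarrow> nat \<Rightarrow> real \<Rightarrow> real" where
  "theta p i j q = ln ((q * (1 - p i j)) / (p i j * (1 - q)))"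

definition communities :: "nat \<Rightarrow> nat \<Rightarrow> nat set set" where
  "communities n r = {C. C \<subseteq> {1..n} \<and> card C = r}"

definition bseq :: "nat \<Rightarrow> nat \<Rightarrow> real" where
  "bseq n r = ln (ln (real n / real r))"

definition calE :: "nat \<Rightarrow> nat \<Rightarrow> (nat \<Rightarrow> nat \<Rightarrow> real) \<Rightarrow> real \<Rightarrow> real \<Rightarrow> nat set \<Rightarrow> nat set set" where
  "calE n r p rho \<epsilon> C = {D. D \<subseteq> C \<and>
     (rho - 1)^2 * expected_edges p D >
       (1 - \<epsilon>/2) * real (card D) *
         (ln (real n * real (card D) / (real r)^2) - bseq n r)}"

definition setting :: "(nat \<Rightarrow> nat \<Rightarrow> nat \<Rightarrow> real) \<Rightarrow> (nat \<Rightarrow> nat) \<Rightarrow> (nat \<Rightarrow> nat set \<Rightarrow> real) \<Rightarrow> bool" where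
  "setting p r rho \<longleftrightarrow>
     (\<forall>n. \<forall>i\<in>{1..n}. \<forall>j\<in>{1..n}. i \<noteq> j \<longrightarrow> p n i j = p n j i \<and> 0 < p n i j \<and> p n i j < 1) \<and>
     (\<forall>n. \<forall>C\<in>communities n (r n). 1 < rho n C \<and>
         (\<forall>i\<in>C. \<forall>j\<in>C. i \<noteq> j \<longrightarrow> rho n C * p n i j \<le> 1))"

definition assumption_1_1 :: "(nat \<Rightarrow> nat \<Rightarrow> nat \<Rightarrow> real) \<Rightarrow> (nat \<Rightarrow> nat) \<Rightarrow> bool" where
  "assumption_1_1 p r \<longleftrightarrow> (\<exists>\<delta>::real. 0 < \<delta> \<and> \<delta> < 1/2 \<and>
     (\<exists>K. \<forall>\<^sub>F n in sequentially. real (r n) \<le> K * real n powr (1/2 - \<delta>)) \<and>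
     (\<exists>\<gamma>::nat \<Rightarrow> real. (\<forall>n. 0 < \<gamma> n) \<and> \<gamma> \<longlonglongrightarrow> 0 \<and>
        (\<forall>n. \<forall>C\<in>communities n (r n). \<forall>D. D \<subseteq> C \<and> 2 \<le> card D \<and>
             real (card D) < real (r n) / (real n / real (r n)) powr \<gamma> n \<longrightarrow>
             real (card D) * pbar (p n) D / (real (card C) * pbar (p n) C) \<le> \<delta>)) \<and>
     (\<forall>c>0. \<forall>\<^sub>F n in sequentially. \<forall>C\<in>communities n (r n).
        1 / pbar (p n) C \<le> c * (real (r n) / ln (real n / real (r n)))))"

definition assumption_1_2 :: "(nat \<Rightarrow> nat \<Rightarrow> nat \<Rightarrow> real) \<Rightarrow> (nat \<Rightarrow> nat) \<Rightarrow> bool" where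
  "assumption_1_2 p r \<longleftrightarrow>
     ((\<lambda>n. ln (real (r n)) / ln (real n)) \<longlonglongrightarrow> 0) \<and>
     (\<forall>c>0. \<forall>\<^sub>F n in sequentially. \<forall>C\<in>communities n (r n).
        ln (1 / pbar (p n) C) \<le> c * (ln (real n / real (r n)) / ln (real (r n))))"

definition assumption_2 :: "(nat \<Rightarrow> nat \<Rightarrow> nat \<Rightarrow> real) \<Rightarrow> (nat \<Rightarrow> nat) \<Rightarrow> (nat \<Rightarrow> nat set \<Rightarrow> real) \<Rightarrow> bool" where
  "assumption_2 p r rho \<longleftrightarrow>
     (\<forall>c>0. \<forall>\<^sub>F n in sequentially. \<forall>C\<in>communities n (r n).
        \<forall>i\<in>C. \<forall>j\<in>C. i \<noteq> j \<longrightarrow> (rho n C)^2 * p n i j \<le> c)"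

end

theory Submission
  imports Defs "HOL-Real_Asymp.Real_Asymp"
begin


lemma hfun_deriv: "x > -1 \<Longrightarrow> (hfun has_real_derivative ln (x+1)) (at x)"
  unfolding hfun_def[abs_def]
  apply (rule derivative_eq_intros refl | simp)+
  done

lemma hfun_cont: "0 \<le> a \<Longrightarrow> continuous_on {a..b} hfun"
  by (rule continuous_at_imp_continuous_on) (auto intro!: DERIV_isCont hfun_deriv)

lemma hfun_strict: assumes "0 \<le> x" "x < y" shows "hfun x < hfun y"
proof (rule DERIV_pos_imp_increasing_open[OF assms(2)])
  fix t assume "x < t" "t < y"
  then show "\<exists>d. (hfun has_real_derivative d) (at t) \<and> 0 < d"
    using assms by (intro exI[of _ "ln (t+1)"]) (auto intro: hfun_deriv)
qed (use assms hfun_cont in auto)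

lemma hfun_mono: "0 \<le> x \<Longrightarrow> x \<le> y \<Longrightarrow> hfun x \<le> hfun y"
  using hfun_strict by (cases "x = y") (auto simp: less_le)

lemma hfun_0: "hfun 0 = 0" by (simp add: hfun_def)

lemma pade: fixes y :: real assumes "0 \<le> y" shows "2*y/(2+y) \<le> ln (1+y)"
proof -
  let ?f = "\<lambda>t::real. ln (1+t) - 2*t/(2+t)"
  have "?f 0 \<le> ?f y"
  proof (rule DERIV_nonneg_imp_nondecreasing[OF assms])
    fix t :: real assume t: "0 \<le> t" "t \<le> y"
    have "(?f has_real_derivative (1/(1+t) - 4/(2+t)^2)) (at t)"
      using t apply - apply (rule derivative_eq_intros refl | simp)+
      apply (auto simp: field_simps power2_eq_square)
      done
    moreover have "1/(1+t) - 4/(2+t)^2 \<ge> 0"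
    proof -
      have "4*(1+t) \<le> (2+t)^2" using t by (simp add: power2_eq_square algebra_simps)
      then have "4/(2+t)^2 \<le> 1/(1+t)" using t
        by (simp add: divide_simps)
      then show ?thesis by simp
    qed
    ultimately show "\<exists>d. (?f has_real_derivative d) (at t) \<and> 0 \<le> d" by blast
  qed
  then show ?thesis by simp
qed

lemma hfun_lower: fixes x :: real assumes "0 \<le> x" shows "x^2/(2+x) \<le> hfun x"
proof -
  have "2*x/(2+x) \<le> ln (1+x)" by (rule pade[OF assms])
  then have "(1+x)*(2*x/(2+x)) \<le> (1+x)*ln(1+x)" using assms by (intro mult_left_mono) auto
  moreover have "(1+x)*(2*x/(2+x)) - x = x^2/(2+x)" using assms
    by (simp add: field_simps power2_eq_square)
  ultimately show ?thesis unfolding hfun_def by (simp add: add.commute)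
qed

lemma hfun_sq: fixes z :: real assumes "0 \<le> z" shows "2*z^2 \<le> hfun (2*z + z^2)"
proof -
  have "2*z/(2+z) \<le> ln (1+z)" by (rule pade[OF assms])
  have e: "2*z + z^2 + 1 = (1+z)^2" by (simp add: power2_eq_square field_simps)
  have l: "ln ((1+z)^2) = 2 * ln (1+z)" using assms by (simp add: ln_realpow)
  have "hfun (2*z+z^2) = (1+z)^2 * (2*ln(1+z)) - 2*z - z^2"
    unfolding hfun_def e l by simp
  moreover have "(1+z)^2 * (2*(2*z/(2+z))) \<le> (1+z)^2 * (2*ln(1+z))"
    using \<open>2*z/(2+z) \<le> ln (1+z)\<close> by (intro mult_left_mono) auto
  moreover have "(1+z)^2 * (2*(2*z/(2+z))) - 2*z - z^2 = (4*z^2 + 3*z^3)/(2+z)"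
    using assms by (simp add: field_simps power2_eq_square power3_eq_cube)
  moreover have "2*z^2 \<le> (4*z^2 + 3*z^3)/(2+z)"
    using assms by (simp add: field_simps power2_eq_square power3_eq_cube)
  ultimately show ?thesis by linarith
qed



lemma core:
  fixes \<epsilon> s E d L M :: real
  assumes e: "0<\<epsilon>" "\<epsilon><1" and s: "0<s" and E: "0<E" and d: "0\<le>d" and L: "0\<le>L" and M: "0\<le>M"
    and cal: "(1-\<epsilon>/2)*d*M < s^2*E" and LM: "L \<le> 3/2*M"
  shows "(\<exists>!c. 1 \<le> c \<and> (1+\<epsilon>)*E*hfun(c-1) = d*L) \<and>
         (\<forall>c. 1 \<le> c \<and> (1+\<epsilon>)*E*hfun(c-1) = d*L \<longrightarrow> c \<le> (1 + 9/10*s)^2)"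
proof -
  define T where "T = d*L/((1+\<epsilon>)*E)"
  have pe: "(1+\<epsilon>)*E > 0" using e E by simp
  have T0: "0 \<le> T" unfolding T_def using d L pe by simp
  have eqT: "\<And>c. (1+\<epsilon>)*E*hfun(c-1) = d*L \<longleftrightarrow> hfun (c-1) = T"
    unfolding T_def using pe by (auto simp: field_simps)
  define z where "z = T + 1"
  have z0: "0 \<le> z" using T0 z_def by simp
  have "T \<le> 2*z^2" unfolding z_def using T0 by (simp add: power2_eq_square algebra_simps)
  also have "\<dots> \<le> hfun (2*z+z^2)" by (rule hfun_sq[OF z0])
  finally have TX: "T \<le> hfun (2*z+z^2)" .
  have "\<exists>x\<ge>0. x \<le> 2*z+z^2 \<and> hfun x = T"
    by (rule IVT') (use T0 TX z0 hfun_cont hfun_0 in auto)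
  then obtain x where x: "0 \<le> x" "hfun x = T" by blast
  have ex: "1 \<le> 1+x \<and> (1+\<epsilon>)*E*hfun((1+x)-1) = d*L" using x eqT[of "1+x"] by simp
  have uniq: "c1 = c2" if "1 \<le> c1" "hfun (c1-1) = T" "1 \<le> c2" "hfun (c2-1) = T" for c1 c2
  proof (rule ccontr)
    assume "c1 \<noteq> c2"
    then consider "c1 < c2" | "c2 < c1" by linarith
    then show False
      using hfun_strict[of "c1-1" "c2-1"] hfun_strict[of "c2-1" "c1-1"] that by (cases; auto)
  qed
  have bound: "c \<le> (1 + 9/10*s)^2" if c: "1 \<le> c" "hfun (c-1) = T" for c
  proof -
    have h0: "0 \<le> hfun (c-1)" using hfun_mono[of 0 "c-1"] c hfun_0 by simp
    have "(1-\<epsilon>/2)*(d*M) \<le> s^2*E" using cal by (simp add: mult.assoc)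
    have "d*L \<le> d*(3/2*M)" by (rule mult_left_mono[OF LM d])
    have A: "(1-\<epsilon>/2)*(d*L) \<le> 3/2*(s^2*E)"
    proof -
      have "(1-\<epsilon>/2)*(d*L) \<le> (1-\<epsilon>/2)*(d*(3/2*M))"
        by (rule mult_left_mono[OF \<open>d*L \<le> d*(3/2*M)\<close>]) (use e in simp)
      also have "\<dots> = 3/2*((1-\<epsilon>/2)*(d*M))" by simp
      also have "\<dots> \<le> 3/2*(s^2*E)" by (rule mult_left_mono[OF \<open>(1-\<epsilon>/2)*(d*M) \<le> s^2*E\<close>]) simp
      finally show ?thesis .
    qed
    have dL: "d*L = (1+\<epsilon>)*E*hfun(c-1)" using eqT[of c] c(2) by simp
    have one: "1 \<le> (1+\<epsilon>)*(1-\<epsilon>/2)"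
    proof -
      have "(1+\<epsilon>)*(1-\<epsilon>/2) = 1 + \<epsilon>*(1-\<epsilon>)/2" by (simp add: field_simps)
      moreover have "0 \<le> \<epsilon>*(1-\<epsilon>)" using e by simp
      ultimately show ?thesis by linarith
    qed
    have hE: "0 \<le> hfun(c-1)*E" using h0 E by simp
    have "1*(hfun(c-1)*E) \<le> ((1+\<epsilon>)*(1-\<epsilon>/2))*(hfun(c-1)*E)"
      by (rule mult_right_mono[OF one hE])
    then have "hfun(c-1)*E \<le> ((1+\<epsilon>)*(1-\<epsilon>/2))*(hfun(c-1)*E)" by simp
    also have "\<dots> = (1-\<epsilon>/2)*(d*L)" unfolding dL by (simp add: field_simps)
    also have "\<dots> \<le> 3/2*s^2*E" using A by simp
    finally have "hfun(c-1)*E \<le> (3/2*s^2)*E" by simp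
    then have hb: "hfun(c-1) \<le> 3/2*s^2" using E by simp
    show ?thesis
    proof (rule ccontr)
      assume nc: "\<not> c \<le> (1 + 9/10*s)^2"
      define w where "w = 9/10*s"
      have w0: "0 \<le> w" using s w_def by simp
      have "2*w+w^2 \<le> c - 1" using nc unfolding w_def
        by (simp add: power2_eq_square algebra_simps)
      then have "hfun (2*w+w^2) \<le> hfun (c-1)" using w0 by (intro hfun_mono) auto
      moreover have "2*w^2 \<le> hfun (2*w+w^2)" by (rule hfun_sq[OF w0])
      moreover have "2*w^2 > 3/2*s^2" unfolding w_def using s by (simp add: power2_eq_square)
      ultimately show False using hb by linarith
    qed
  qed
  show ?thesis
  proof
    show "\<exists>!c. 1 \<le> c \<and> (1+\<epsilon>)*E*hfun(c-1) = d*L"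
      using ex uniq eqT by metis
    show "\<forall>c. 1 \<le> c \<and> (1+\<epsilon>)*E*hfun(c-1) = d*L \<longrightarrow> c \<le> (1 + 9/10*s)^2"
      using bound eqT by blast
  qed
qed

lemma theta_bound:
  fixes p \<rho> c :: real
  assumes p: "0<p" and r: "1<\<rho>" and rp: "\<rho>^2*p \<le> 1/10" and c1: "1 \<le> c"
    and cb: "c \<le> (1 + 9/10*(\<rho>-1))^2"
  shows "ln (c*p*(1-p)/(p*(1-c*p))) \<le> 2 * ln (\<rho>*p*(1-p)/(p*(1-\<rho>*p)))"
proof -
  define s where "s = \<rho> - 1"
  have s0: "0 < s" using r s_def by simp
  have rho: "\<rho> = 1 + s" using s_def by simp
  have cle: "c \<le> \<rho>^2 - 19/100*s^2" using cb s0 unfolding rho by (simp add: power2_eq_square algebra_simps)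
  have "1 \<le> \<rho>^2" using r by (simp add: one_le_power)
  then have "1*p \<le> \<rho>^2*p" using p by (intro mult_right_mono) auto
  then have "p \<le> \<rho>^2*p" by simp
  then have p1: "p \<le> 1/10" using rp by simp
  have "\<rho>*p \<le> \<rho>^2*p" using p r by (simp add: power2_eq_square)
  then have rp1: "\<rho>*p < 1" using rp by simp
  have "0 \<le> 19/100*s^2" by simp
  then have "c \<le> \<rho>^2" using cle by linarith
  then have "c*p \<le> \<rho>^2*p" using p by (simp add: mult_right_mono)
  then have cp1: "c*p < 1" using rp by simp
  have key: "c*((1-p)+p*s^2) \<le> \<rho>^2*(1-p)"
  proof -
    have "c*((1-p)+p*s^2) \<le> (\<rho>^2 - 19/100*s^2)*((1-p)+p*s^2)"
      using cle p p1 by (intro mult_right_mono) auto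
    also have "\<dots> = \<rho>^2*(1-p) - s^2*(19/100*(1-p) - \<rho>^2*p) - 19/100*s^2*p*s^2"
      by (simp add: field_simps power2_eq_square)
    also have "\<dots> \<le> \<rho>^2*(1-p)"
    proof -
      have "0 \<le> 19/100*(1-p) - \<rho>^2*p" using p1 rp by simp
      then have "0 \<le> s^2*(19/100*(1-p) - \<rho>^2*p)" by simp
      moreover have "0 \<le> 19/100*s^2*p*s^2" using p by simp
      ultimately show ?thesis by linarith
    qed
    finally show ?thesis .
  qed
  define A where "A = c*(1-p)/(1-c*p)"
  define B where "B = \<rho>*(1-p)/(1-\<rho>*p)"
  have Aeq: "c*p*(1-p)/(p*(1-c*p)) = A"
  proof -
    have "c*p*(1-p)/(p*(1-c*p)) = (p*(c*(1-p)))/(p*(1-c*p))" by (simp add: ac_simps)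
    also have "\<dots> = A" unfolding A_def using p by (intro mult_divide_mult_cancel_left) simp
    finally show ?thesis .
  qed
  have Beq: "\<rho>*p*(1-p)/(p*(1-\<rho>*p)) = B"
  proof -
    have "\<rho>*p*(1-p)/(p*(1-\<rho>*p)) = (p*(\<rho>*(1-p)))/(p*(1-\<rho>*p))" by (simp add: ac_simps)
    also have "\<dots> = B" unfolding B_def using p by (intro mult_divide_mult_cancel_left) simp
    finally show ?thesis .
  qed
  have A0: "0 < A" unfolding A_def using c1 p1 cp1 by simp
  have B0: "0 < B" unfolding B_def using r p1 rp1 by simp
  have AB: "A \<le> B^2"
  proof -
    have "(1-\<rho>*p)^2 + \<rho>^2*p*(1-p) = (1-p)+p*s^2" unfolding rho by (simp add: algebra_simps power2_eq_square)
    then have "c*((1-\<rho>*p)^2 + \<rho>^2*p*(1-p)) \<le> \<rho>^2*(1-p)" using key by simp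
    then have "c*(1-\<rho>*p)^2 \<le> \<rho>^2*(1-p)*(1-c*p)" by (simp add: algebra_simps power2_eq_square)
    then have "c*(1-\<rho>*p)^2*(1-p) \<le> \<rho>^2*(1-p)*(1-c*p)*(1-p)" using p1 by (intro mult_right_mono) auto
    then have i1: "(c*(1-p))*(1-\<rho>*p)^2 \<le> (\<rho>^2*(1-p)^2)*(1-c*p)" by (simp add: algebra_simps power2_eq_square)
    have q1: "0 < 1-c*p" "0 < (1-\<rho>*p)^2" using cp1 rp1 by auto
    have "A*(1-\<rho>*p)^2 = (c*(1-p))*(1-\<rho>*p)^2/(1-c*p)" unfolding A_def by simp
    also have "\<dots> \<le> \<rho>^2*(1-p)^2" using i1 q1 by (simp add: divide_le_eq)
    finally have "A*(1-\<rho>*p)^2 \<le> \<rho>^2*(1-p)^2" .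
    then have "A \<le> \<rho>^2*(1-p)^2/(1-\<rho>*p)^2" using q1 by (simp add: le_divide_eq)
    also have "\<dots> = B^2" unfolding B_def by (simp add: power_divide power_mult_distrib)
    finally show ?thesis .
  qed
  have "ln A \<le> ln (B^2)" using A0 AB B0 by (subst ln_le_cancel_iff) auto
  also have "\<dots> = 2 * ln B" using B0 by (simp add: ln_realpow)
  finally show ?thesis unfolding Aeq Beq .
qed



lemma ev_ln_le: fixes c :: real assumes "c > 0" shows "eventually (\<lambda>x::real. ln x \<le> c*x) at_top"
proof -
  have "((\<lambda>x::real. ln x / x) \<longlongrightarrow> 0) at_top" by real_asymp
  then have "eventually (\<lambda>x. ln x / x < c) at_top" using assms by (rule order_tendstoD(2))
  moreover have "eventually (\<lambda>x::real. x > 0) at_top" by (rule eventually_gt_at_top)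
  ultimately show ?thesis
    by eventually_elim (auto simp: divide_less_eq)
qed

lemma seq_ln: assumes "eventually P at_top" shows "eventually (\<lambda>n. P (ln (real n))) sequentially"
proof -
  have "filterlim (\<lambda>n. ln (real n)) at_top sequentially"
    by (rule filterlim_compose[OF ln_at_top filterlim_real_sequentially])
  then show ?thesis using assms by (simp add: filterlim_iff)
qed

lemma choose2_real: "real (n choose 2) = real n * (real n - 1) / 2"
proof (induction n)
  case 0 then show ?case by simp
next
  case (Suc m)
  have "Suc m choose 2 = (m choose 1) + (m choose 2)"
    by (simp add: numeral_2_eq_2)
  then show ?case using Suc by (simp add: field_simps)
qed

lemma ee_nonneg: assumes "\<forall>i\<in>D. \<forall>j\<in>D. i<j \<longrightarrow> 0 \<le> p i j" shows "0 \<le> expected_edges p D"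
  unfolding expected_edges_def using assms by (intro sum_nonneg) auto

lemma ee_ge: assumes "finite D" "\<forall>i\<in>D. \<forall>j\<in>D. i<j \<longrightarrow> 0 \<le> p i j" "i\<in>D" "j\<in>D" "i<j"
  shows "p i j \<le> expected_edges p D"
proof -
  have "p i j = (if i < j then p i j else 0)" using assms by simp
  also have "\<dots> \<le> (\<Sum>j\<in>D. if i < j then p i j else 0)"
    by (rule member_le_sum) (use assms in auto)
  also have "\<dots> \<le> (\<Sum>i\<in>D. \<Sum>j\<in>D. if i < j then p i j else 0)"
    by (rule member_le_sum[where f = "\<lambda>i. \<Sum>j\<in>D. if i < j then p i j else 0"]) (use assms in \<open>auto intro!: sum_nonneg\<close>)
  finally show ?thesis unfolding expected_edges_def .
qed

lemma ee_le1: assumes "card D \<le> 1" shows "expected_edges p D = 0"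
proof (cases "finite D")
  case False then show ?thesis by (simp add: expected_edges_def)
next
  case True
  then have "D = {} \<or> (\<exists>x. D = {x})" using assms
    by (metis card_0_eq card_1_singletonE le_Suc_eq One_nat_def le_zero_eq)
  then show ?thesis by (auto simp: expected_edges_def)
qed

lemma ee_empty: "expected_edges p {} = 0" by (simp add: expected_edges_def)

lemma calE_ne: "D \<in> calE n r p rho \<epsilon> C \<Longrightarrow> D \<noteq> {}"
  by (auto simp: calE_def ee_empty)

lemma calE_pos:
  assumes "D \<in> calE n r p rho \<epsilon> C" "0 \<le> (1-\<epsilon>/2) * real (card D) * (ln (real n * real (card D) / (real r)^2) - bseq n r)"
  shows "0 < (rho-1)^2 * expected_edges p D"
  using assms by (auto simp: calE_def)



lemma small_contra:
  fixes \<delta> \<epsilon> s \<theta> h d r X EC ED pC pD M :: real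
  assumes dl: "0 < \<delta>" and e: "0<\<epsilon>" "\<epsilon><1" and s: "0 < s" "s \<le> \<theta>"
    and h: "s^2/(2+s) \<le> h" and d: "2 \<le> d" "d \<le> r" and X: "0 < X"
    and EC: "EC = pC*r*(r-1)/2" and ED: "ED = pD*d*(d-1)/2" and pC: "0 < pC"
    and dp: "d*pD \<le> \<delta>*r*pC" and hyp: "EC*h \<le> (1-\<epsilon>)*(r*X)"
    and cal: "(1-\<epsilon>/2)*d*M < s^2*ED"
  shows "(1-\<epsilon>/2)*M < \<delta>*(2+\<theta>)*(1-\<epsilon>)*X"
proof -
  have h0: "0 \<le> h" using h s by (smt (verit) divide_nonneg_pos zero_le_power2)
  have "s^2 \<le> (2+s)*h" using h s by (simp add: divide_le_eq mult.commute)
  also have "\<dots> \<le> (2+\<theta>)*h" using s h0 by (intro mult_right_mono) auto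
  finally have s2: "s^2 \<le> (2+\<theta>)*h" .
  have r1: "0 < r - 1" using d by simp
  have "h*pC*r*(r-1) = 2*(EC*h)" unfolding EC by (simp add: field_simps)
  moreover have "2*(1-\<epsilon>)*r*X = 2*((1-\<epsilon>)*(r*X))" by simp
  ultimately have hr: "h*pC*r*(r-1) \<le> 2*(1-\<epsilon>)*r*X" using hyp by linarith
  define Q where "Q = s^2*r*pC"
  have rp0: "0 \<le> r*pC" using pC d by simp
  have Q1: "Q \<le> (2+\<theta>)*h*r*pC" unfolding Q_def using mult_right_mono[OF s2 rp0] by (simp add: ac_simps)
  have "s^2*ED = (d-1)/2 * (s^2 * (d*pD))" unfolding ED by (simp add: algebra_simps)
  also have "\<dots> \<le> (d-1)/2 * (s^2 * (\<delta>*r*pC))"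
    using dp d by (intro mult_left_mono) auto
  also have "\<dots> = \<delta>*(d-1)/2 * Q" unfolding Q_def by (simp add: algebra_simps)
  finally have A: "s^2*ED \<le> \<delta>*(d-1)/2 * Q" .
  have "Q*(r-1) \<le> (2+\<theta>)*h*r*pC*(r-1)" using Q1 r1 by (intro mult_right_mono) auto
  also have "\<dots> = (2+\<theta>)*(h*pC*r*(r-1))" by (simp add: algebra_simps)
  also have "\<dots> \<le> (2+\<theta>)*(2*(1-\<epsilon>)*r*X)" using hr s by (intro mult_left_mono) auto
  finally have B: "Q*(r-1) \<le> (2+\<theta>)*(2*(1-\<epsilon>)*r*X)" .
  have dd: "0 \<le> \<delta>*(d-1)/2" using dl d by simp
  have "s^2*ED*(r-1) \<le> \<delta>*(d-1)/2 * Q * (r-1)" using A r1 by (intro mult_right_mono) auto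
  also have "\<dots> = \<delta>*(d-1)/2 * (Q * (r-1))" by simp
  also have "\<dots> \<le> \<delta>*(d-1)/2 * ((2+\<theta>)*(2*(1-\<epsilon>)*r*X))" by (rule mult_left_mono[OF B dd])
  also have "\<dots> = (\<delta>*(2+\<theta>)*(1-\<epsilon>)*X) * ((d-1)*r)" by (simp add: field_simps)
  also have "\<dots> \<le> (\<delta>*(2+\<theta>)*(1-\<epsilon>)*X) * (d*(r-1))"
  proof (rule mult_left_mono)
    show "(d-1)*r \<le> d*(r-1)" using d by (simp add: algebra_simps)
    show "0 \<le> \<delta>*(2+\<theta>)*(1-\<epsilon>)*X" using dl s e X by simp
  qed
  finally have C: "s^2*ED*(r-1) \<le> (\<delta>*(2+\<theta>)*(1-\<epsilon>)*X*d)*(r-1)" by (simp add: ac_simps)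
  then have "s^2*ED \<le> \<delta>*(2+\<theta>)*(1-\<epsilon>)*X*d" using r1 by simp
  then have "((1-\<epsilon>/2)*M)*d < (\<delta>*(2+\<theta>)*(1-\<epsilon>)*X)*d" using cal by (simp add: ac_simps)
  then show ?thesis using d by simp
qed

lemma asym11:
  fixes \<delta> \<epsilon> N u k b :: real
  assumes dl: "0 < \<delta>" "\<delta> < 1/2" and e: "0<\<epsilon>" "\<epsilon><1" and N: "0 < N"
    and u: "u \<le> k + (1/2-\<delta>)*N" and k: "0 \<le> k" and b: "0 \<le> b" "b \<le> B0"
    and big: "2*k + B0 \<le> \<delta>*\<epsilon>*N"
  shows "\<delta>*(2+(1/2-\<delta>))*(1-\<epsilon>)*(N-u) \<le> (1-\<epsilon>/2)*(N - 2*u - b)"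
proof -
  define A where "A = 1-\<epsilon>/2"
  define B where "B = \<delta>*(2+(1/2-\<delta>))*(1-\<epsilon>)"
  have B0: "0 \<le> B" unfolding B_def using dl e by simp
  have q1: "\<delta>*(2+(1/2-\<delta>)) \<le> 1"
  proof -
    have "1 - \<delta>*(2+(1/2-\<delta>)) = (1/2-\<delta>)*(2-\<delta>)" by (simp add: field_simps)
    moreover have "0 \<le> (1/2-\<delta>)*(2-\<delta>)" using dl by simp
    ultimately show ?thesis by linarith
  qed
  have B1: "B \<le> 1"
  proof -
    have "B \<le> \<delta>*(2+(1/2-\<delta>))*1" unfolding B_def using dl e by (intro mult_left_mono) auto
    then show ?thesis using q1 by simp
  qed
  have A1: "1/2 \<le> A" "A \<le> 1" unfolding A_def using e by auto
  have q2: "(2+(1/2-\<delta>))*(1/2+\<delta>) \<le> 2"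
  proof -
    have "2 - (2+(1/2-\<delta>))*(1/2+\<delta>) = (1/2-\<delta>)*(3/2-\<delta>)" by (simp add: field_simps)
    moreover have "0 \<le> (1/2-\<delta>)*(3/2-\<delta>)" using dl by simp
    ultimately show ?thesis by linarith
  qed
  have B2: "B*(1/2+\<delta>) \<le> 2*\<delta>*(1-\<epsilon>)"
  proof -
    have "B*(1/2+\<delta>) = (\<delta>*(1-\<epsilon>))*((2+(1/2-\<delta>))*(1/2+\<delta>))" unfolding B_def by (simp add: ac_simps)
    also have "\<dots> \<le> (\<delta>*(1-\<epsilon>))*2" using q2 dl e by (intro mult_left_mono) auto
    finally show ?thesis by simp
  qed
  have "0 \<le> 2*A - B" using A1 B1 by simp
  then have "(2*A-B)*u \<le> (2*A-B)*(k + (1/2-\<delta>)*N)" using u by (intro mult_left_mono) auto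
  have "2*A-B \<le> 2" using A1 B0 by simp
  then have kk: "(2*A-B)*k \<le> 2*k" using k by (rule mult_right_mono)
  have "A*b \<le> 1*b" using A1 b by (intro mult_right_mono) auto
  then have bb: "A*b \<le> b" by simp
  have N1: "(2*\<delta>*A - B*(1/2+\<delta>))*N \<ge> (\<delta>*\<epsilon>)*N"
  proof (rule mult_right_mono)
    show "\<delta>*\<epsilon> \<le> 2*\<delta>*A - B*(1/2+\<delta>)" using B2 unfolding A_def by (simp add: algebra_simps)
  qed (use N in simp)
  have "A*(N - 2*u - b) - B*(N-u) = (A-B)*N - (2*A-B)*u - A*b" by (simp add: algebra_simps)
  also have "\<dots> \<ge> (A-B)*N - (2*A-B)*(k + (1/2-\<delta>)*N) - A*b"
    using \<open>(2*A-B)*u \<le> (2*A-B)*(k + (1/2-\<delta>)*N)\<close> by simp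
  also have "(A-B)*N - (2*A-B)*(k + (1/2-\<delta>)*N) - A*b = (2*\<delta>*A - B*(1/2+\<delta>))*N - (2*A-B)*k - A*b"
    by (simp add: algebra_simps)
  finally have "A*(N - 2*u - b) - B*(N-u) \<ge> (2*\<delta>*A - B*(1/2+\<delta>))*N - (2*A-B)*k - A*b" .
  then have "A*(N - 2*u - b) - B*(N-u) \<ge> 0" using N1 kk bb b big by linarith
  then show ?thesis unfolding A_def B_def by simp
qed

lemma sbound:
  fixes EC h \<epsilon> r X pC c0 :: real
  assumes hyp: "EC*h \<le> (1-\<epsilon>)*(r*X)" and EC: "EC = pC*r*(r-1)/2" and pC: "X/(c0*r) \<le> pC"
    and r: "2 \<le> r" and X: "0 < X" and c0: "0 < c0" and h: "0 \<le> h" and e: "0 < \<epsilon>" "\<epsilon> < 1"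
  shows "h \<le> 4*c0"
proof -
  have rr: "0 \<le> r*(r-1)/2" using r by simp
  have "X/(c0*r) * (r*(r-1)/2) \<le> pC * (r*(r-1)/2)" by (rule mult_right_mono[OF pC rr])
  moreover have "X/(c0*r) * (r*(r-1)/2) = X*(r-1)/(2*c0)" using r c0 by (simp add: field_simps)
  moreover have "pC * (r*(r-1)/2) = EC" unfolding EC by simp
  ultimately have "X*(r-1)/(2*c0) \<le> EC" by simp
  then have "X*(r-1)/(2*c0)*h \<le> EC*h" using h by (intro mult_right_mono) auto
  also have "\<dots> \<le> (1-\<epsilon>)*(r*X)" by (rule hyp)
  also have "\<dots> \<le> r*X" using e r X by (simp add: mult_le_cancel_right1)
  finally have "X*((r-1)*h) \<le> X*(2*c0*r)" using c0 by (simp add: field_simps)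
  then have "(r-1)*h \<le> 2*c0*r" using X by simp
  also have "\<dots> \<le> 4*c0*(r-1)" using c0 r by simp
  finally have "(r-1)*h \<le> (r-1)*(4*c0)" by (simp add: ac_simps)
  then show ?thesis using r by simp
qed

lemma large_ok:
  fixes N u ld g X b M L :: real
  assumes "u - g \<le> ld" "g \<le> X/20" "X = N - u" "M = N + ld - 2*u - b" "L = N - ld" "b \<le> X/4"
  shows "L \<le> 3/2*M"
  using assms by linarith



definition Mv :: "nat \<Rightarrow> nat \<Rightarrow> nat set \<Rightarrow> real" where
  "Mv n r D = ln (real n * real (card D) / (real r)^2) - bseq n r"

definition Lv :: "nat \<Rightarrow> nat set \<Rightarrow> real" where
  "Lv n D = ln (real n / real (card D))"

definition Good :: "(nat \<Rightarrow> nat \<Rightarrow> nat \<Rightarrow> real) \<Rightarrow> (nat \<Rightarrow> nat) \<Rightarrow> (nat \<Rightarrow> nat set \<Rightarrow> real) \<Rightarrow> real \<Rightarrow> nat \<Rightarrow> bool" where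
  "Good p r rho \<epsilon> n \<longleftrightarrow> (\<forall>C\<in>communities n (r n). \<forall>D\<in>calE n (r n) (p n) (rho n C) \<epsilon> C.
     0 < expected_edges (p n) D \<and> 0 \<le> Mv n (r n) D \<and> Lv n D \<le> 3/2 * Mv n (r n) D)"

lemma logs:
  fixes n d r :: nat
  assumes n: "0 < real n" and d: "1 \<le> d" "d \<le> r"
  shows "ln (real n * real d / (real r)^2) = ln (real n) + ln (real d) - 2*ln (real r)"
    and "ln (real n / real d) = ln (real n) - ln (real d)"
    and "ln (real n / real r) = ln (real n) - ln (real r)"
    and "0 \<le> ln (real d)" and "ln (real d) \<le> ln (real r)" and "0 \<le> ln (real r)"
proof -
  have d0: "0 < real d" "0 < real r" using d by auto
  show "ln (real n * real d / (real r)^2) = ln (real n) + ln (real d) - 2*ln (real r)"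
    using n d0 by (simp add: ln_div ln_mult ln_realpow)
  show "ln (real n / real d) = ln (real n) - ln (real d)" using n d0 by (simp add: ln_div)
  show "ln (real n / real r) = ln (real n) - ln (real r)" using n d0 by (simp add: ln_div)
  show "0 \<le> ln (real d)" using d by simp
  show "ln (real d) \<le> ln (real r)" using d d0 by simp
  show "0 \<le> ln (real r)" using d by simp
qed

lemma comm_facts:
  assumes "C \<in> communities n r" "D \<subseteq> C"
  shows "finite D" "card D \<le> r" "card D \<le> n" "D \<subseteq> {1..n}" "finite C" "card C = r" "C \<subseteq> {1..n}"
proof -
  have C: "C \<subseteq> {1..n}" "card C = r" using assms by (auto simp: communities_def)
  then show fC: "finite C" using finite_subset by blast
  show "finite D" using fC assms(2) finite_subset by blast
  show "card D \<le> r" using C fC assms(2) card_mono by metis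
  have "card C \<le> n" using C card_mono[of "{1..n}" C] by simp
  then show "card D \<le> n" using C fC assms(2) card_mono by (metis le_trans)
  show "D \<subseteq> {1..n}" using C assms by auto
  show "card C = r" "C \<subseteq> {1..n}" using C by auto
qed

lemma calE_E:
  assumes "D \<in> calE n r p rho \<epsilon> C" "\<epsilon> < 1" "0 \<le> Mv n r D"
  shows "0 < expected_edges p D"
proof -
  have "0 \<le> (1-\<epsilon>/2) * real (card D) * Mv n r D" using assms by simp
  then have "0 < (rho-1)^2 * expected_edges p D" using calE_pos[OF assms(1)] unfolding Mv_def by simp
  then show ?thesis by (simp add: zero_less_mult_iff)
qed

lemma pos_pairs:
  assumes set: "setting p r rho" and "D \<subseteq> {1..n}"
  shows "\<forall>i\<in>D. \<forall>j\<in>D. i<j \<longrightarrow> 0 \<le> p n i j"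
  using assms unfolding setting_def by (metis less_eq_real_def nat_neq_iff subsetD)

lemma good12:
  assumes set: "setting p r rho" and A12: "assumption_1_2 p r" and e: "0 < \<epsilon>" "\<epsilon> < 1"
  shows "eventually (\<lambda>n. Good p r rho \<epsilon> n) sequentially"
proof -
  have lim: "(\<lambda>n. ln (real (r n)) / ln (real n)) \<longlonglongrightarrow> 0" using A12 by (simp add: assumption_1_2_def)
  have F1: "eventually (\<lambda>n. ln (real (r n)) / ln (real n) < 1/20) sequentially"
    by (rule order_tendstoD(2)[OF lim]) simp
  have "eventually (\<lambda>x::real. ln x \<le> 1/10*x \<and> 20 \<le> x) at_top"
    by (rule eventually_conj[OF ev_ln_le eventually_ge_at_top]) simp
  then have F2: "eventually (\<lambda>n. ln (ln (real n)) \<le> 1/10*ln (real n) \<and> 20 \<le> ln (real n)) sequentially"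
    by (rule seq_ln)
  show ?thesis using F1 F2
  proof eventually_elim
    case (elim n)
    define N where "N = ln (real n)"
    have N20: "20 \<le> N" using elim N_def by simp
    have n0: "0 < real n" using N20 N_def by (cases "n = 0") auto
    show ?case unfolding Good_def
    proof (intro ballI)
      fix C D assume C: "C \<in> communities n (r n)" and D: "D \<in> calE n (r n) (p n) (rho n C) \<epsilon> C"
      have DC: "D \<subseteq> C" using D by (simp add: calE_def)
      note cf = comm_facts[OF C DC]
      have "D \<noteq> {}" using calE_ne[OF D] .
      then have d1: "1 \<le> card D" using cf(1) by (simp add: Suc_le_eq card_gt_0_iff)
      have dr: "card D \<le> r n" using cf by simp
      note lg = logs[OF n0 d1 dr]
      define u where "u = ln (real (r n))"
      define ld where "ld = ln (real (card D))"
      have u20: "u < N/20" using elim N20 unfolding u_def N_def by (simp add: divide_less_eq)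
      have X: "ln (real n / real (r n)) = N - u" using lg unfolding N_def u_def by simp
      have Xp: "0 < N - u" using u20 N20 by simp
      have XN: "N - u \<le> N" using lg u_def by simp
      have b: "bseq n (r n) = ln (N - u)" unfolding bseq_def X ..
      have bN: "ln (N - u) \<le> ln N" using Xp XN by simp
      have lnN: "ln N \<le> N/10" using elim N_def by simp
      have M: "Mv n (r n) D = N + ld - 2*u - ln (N - u)" unfolding Mv_def b lg(1) N_def ld_def u_def by simp
      have L: "Lv n D = N - ld" unfolding Lv_def lg(2) N_def ld_def by simp
      have ld: "0 \<le> ld" "ld \<le> u" using lg unfolding ld_def u_def by auto
      have M0: "0 \<le> Mv n (r n) D" unfolding M using ld u20 bN lnN N20 by argo
      moreover have "Lv n D \<le> 3/2 * Mv n (r n) D" unfolding M L using ld u20 bN lnN N20 by argo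
      moreover have "0 < expected_edges (p n) D" by (rule calE_E[OF D e(2) M0])
      ultimately show "0 < expected_edges (p n) D \<and> 0 \<le> Mv n (r n) D \<and> Lv n D \<le> 3/2 * Mv n (r n) D"
        by simp
    qed
  qed
qed



lemma pbar_eq:
  assumes "2 \<le> card D"
  shows "expected_edges p D = pbar p D * real (card D) * (real (card D) - 1) / 2"
proof -
  define q where "q = real (card D choose 2)"
  have q: "q = real (card D) * (real (card D) - 1) / 2" unfolding q_def by (rule choose2_real)
  have q0: "0 < q" unfolding q using assms by simp
  have "pbar p D * real (card D) * (real (card D) - 1) / 2 = pbar p D * (real (card D) * (real (card D) - 1) / 2)"
    by simp
  also have "\<dots> = pbar p D * q" using q by simp
  also have "\<dots> = (expected_edges p D / q) * q" unfolding pbar_def q_def by simp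
  also have "\<dots> = expected_edges p D" using q0 by simp
  finally show ?thesis by simp
qed

lemma good11:
  assumes set: "setting p r rho" and A11: "assumption_1_1 p r" and e: "0 < \<epsilon>" "\<epsilon> < 1"
    and hyp: "\<forall>n. \<forall>C\<in>communities n (r n). \<forall>D. D \<subseteq> C \<and> D \<noteq> {} \<longrightarrow>
        expected_edges (p n) D * hfun (rho n C - 1) / (real (card D) * ln (real n / real (card D)))
          \<le> 1 - \<epsilon>"
  shows "eventually (\<lambda>n. Good p r rho \<epsilon> n) sequentially"
proof -
  obtain \<delta> :: real and K and \<gamma> :: "nat \<Rightarrow> real" where
    dl: "0 < \<delta>" "\<delta> < 1/2" and
    FK: "\<forall>\<^sub>F n in sequentially. real (r n) \<le> K * real n powr (1/2 - \<delta>)" and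
    g0: "\<forall>n. 0 < \<gamma> n" and glim: "\<gamma> \<longlonglongrightarrow> 0" and
    small: "\<forall>n. \<forall>C\<in>communities n (r n). \<forall>D. D \<subseteq> C \<and> 2 \<le> card D \<and>
             real (card D) < real (r n) / (real n / real (r n)) powr \<gamma> n \<longrightarrow>
             real (card D) * pbar (p n) D / (real (card C) * pbar (p n) C) \<le> \<delta>" and
    iii: "\<forall>c>0. \<forall>\<^sub>F n in sequentially. \<forall>C\<in>communities n (r n).
        1 / pbar (p n) C \<le> c * (real (r n) / ln (real n / real (r n)))"
    using A11 unfolding assumption_1_1_def by blast
  define \<theta> where "\<theta> = 1/2 - \<delta>"
  have th0: "0 < \<theta>" using dl \<theta>_def by simp
  define c0 where "c0 = \<theta>^2/(8*(2+\<theta>))"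
  have c00: "0 < c0" unfolding c0_def using th0 by simp
  have hth: "4*c0 < hfun \<theta>"
  proof -
    have "\<theta>^2/(2+\<theta>) \<le> hfun \<theta>" using hfun_lower th0 by simp
    moreover have "4*c0 < \<theta>^2/(2+\<theta>)" unfolding c0_def using th0 by (simp add: field_simps add_pos_pos mult_pos_pos)
    ultimately show ?thesis by linarith
  qed
  define K' where "K' = max K 1"
  define k where "k = ln K'"
  have K'1: "1 \<le> K'" unfolding K'_def by simp
  have k0: "0 \<le> k" unfolding k_def using K'1 by simp
  obtain X0 :: real where X0: "\<And>X::real. X \<ge> X0 \<Longrightarrow> ln X \<le> 1/4*X"
    using ev_ln_le[of "1/4"] by (auto simp: eventually_at_top_linorder)
  define X1 where "X1 = max X0 2"
  have de: "0 < \<delta>*\<epsilon>" using dl e by simp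
  have F2: "\<forall>\<^sub>F n in sequentially. \<forall>C\<in>communities n (r n).
        1 / pbar (p n) C \<le> c0 * (real (r n) / ln (real n / real (r n)))" using iii c00 by blast
  have F3: "\<forall>\<^sub>F n in sequentially. \<gamma> n < 1/20" by (rule order_tendstoD(2)[OF glim]) simp
  have "eventually (\<lambda>x::real. ln x \<le> (\<delta>*\<epsilon>/2)*x \<and> 4*k/(\<delta>*\<epsilon>) \<le> x \<and> 2*(X1+k) \<le> x \<and> 1 \<le> x) at_top"
    by (intro eventually_conj ev_ln_le eventually_ge_at_top) (use de in simp)
  then have F4: "\<forall>\<^sub>F n in sequentially. ln (ln (real n)) \<le> (\<delta>*\<epsilon>/2)*ln (real n) \<and>
      4*k/(\<delta>*\<epsilon>) \<le> ln (real n) \<and> 2*(X1+k) \<le> ln (real n) \<and> 1 \<le> ln (real n)"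
    by (rule seq_ln)
  show ?thesis using FK F2 F3 F4
  proof eventually_elim
    case (elim n)
    define N where "N = ln (real n)"
    have N1: "1 \<le> N" using elim N_def by simp
    have n0: "0 < real n" using N1 N_def by (cases "n = 0") auto
    have lnN: "ln N \<le> (\<delta>*\<epsilon>/2)*N" using elim N_def by simp
    have "4*k \<le> (\<delta>*\<epsilon>)*N" using elim de unfolding N_def by (simp add: divide_le_eq mult.commute)
    then have big: "2*k + ln N \<le> \<delta>*\<epsilon>*N" using lnN by simp
    have NX1: "2*(X1+k) \<le> N" using elim N_def by simp
    have rK: "real (r n) \<le> K' * real n powr (1/2 - \<delta>)"
    proof -
      have "K * real n powr (1/2 - \<delta>) \<le> K' * real n powr (1/2 - \<delta>)"
        unfolding K'_def by (intro mult_right_mono) auto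
      then show ?thesis using elim by linarith
    qed
    show ?case unfolding Good_def
    proof (intro ballI)
      fix C D assume C: "C \<in> communities n (r n)" and D: "D \<in> calE n (r n) (p n) (rho n C) \<epsilon> C"
      have DC: "D \<subseteq> C" using D by (simp add: calE_def)
      note cf = comm_facts[OF C DC]
      have "D \<noteq> {}" using calE_ne[OF D] .
      then have d1: "1 \<le> card D" using cf(1) by (simp add: Suc_le_eq card_gt_0_iff)
      have dr: "card D \<le> r n" using cf by simp
      note lg = logs[OF n0 d1 dr]
      define u where "u = ln (real (r n))"
      define ld where "ld = ln (real (card D))"
      define X where "X = N - u"
      have r0: "0 < real (r n)" using d1 dr by simp
      have u_le: "u \<le> k + (1/2-\<delta>)*N"
      proof -
        have "u \<le> ln (K' * real n powr (1/2 - \<delta>))" unfolding u_def using rK r0 by simp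
        also have "\<dots> = k + (1/2-\<delta>)*N" unfolding k_def N_def using K'1 n0 by (simp add: ln_mult)
        finally show ?thesis .
      qed
      have u0: "0 \<le> u" using lg u_def by simp
      have Xeq: "ln (real n / real (r n)) = X" using lg unfolding N_def u_def X_def by simp
      have "\<delta>*N \<ge> 0" using dl N1 by simp
      then have XX1: "X1 \<le> X" unfolding X_def using u_le NX1 by (simp add: algebra_simps)
      have X2: "2 \<le> X" "X0 \<le> X" using XX1 unfolding X1_def by auto
      have XN: "X \<le> N" using u0 X_def by simp
      have b: "bseq n (r n) = ln X" unfolding bseq_def Xeq ..
      have b0: "0 \<le> ln X" using X2 by simp
      have bN: "ln X \<le> ln N" using X2 XN by simp
      have M: "Mv n (r n) D = N + ld - 2*u - ln X" unfolding Mv_def b lg(1) N_def ld_def u_def by simp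
      have L: "Lv n D = N - ld" unfolding Lv_def lg(2) N_def ld_def by simp
      have ld: "0 \<le> ld" "ld \<le> u" using lg unfolding ld_def u_def by auto
      have "\<delta>*\<epsilon>*N \<le> \<delta>*2*N" using dl e N1 by (intro mult_right_mono mult_left_mono) auto
      then have M0: "0 \<le> Mv n (r n) D" unfolding M using ld u_le bN big by argo
      have E0: "0 < expected_edges (p n) D" by (rule calE_E[OF D e(2) M0])
      have d2: "2 \<le> card D"
      proof (rule ccontr)
        assume "\<not> 2 \<le> card D"
        then have "card D \<le> 1" by simp
        then show False using ee_le1[of D "p n"] E0 by simp
      qed
      have LM: "Lv n D \<le> 3/2 * Mv n (r n) D"
      proof (cases "real (card D) < real (r n) / (real n / real (r n)) powr \<gamma> n")
        case True
        have r2: "2 \<le> card C" using d2 dr cf by simp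
        have rr: "2 \<le> real (r n)" using r2 cf by simp
        obtain i j where ij: "i \<in> C" "j \<in> C" "i \<noteq> j"
        proof -
          have "1 < card C" using r2 by simp
          then have "\<not> card C \<le> Suc 0" by simp
          then show ?thesis using that card_le_Suc0_iff_eq[OF cf(5)] by blast
        qed
        have pos: "\<forall>i\<in>C. \<forall>j\<in>C. i<j \<longrightarrow> 0 \<le> p n i j" by (rule pos_pairs[OF set cf(7)])
        have pp: "\<forall>a\<in>C. \<forall>b\<in>C. a \<noteq> b \<longrightarrow> 0 < p n a b"
          using set cf(7) unfolding setting_def by blast
        have ppos: "0 < p n (min i j) (max i j)"
          using pp ij by (auto simp: min_def max_def)
        have "p n (min i j) (max i j) \<le> expected_edges (p n) C"
          by (rule ee_ge[OF cf(5) pos]) (use ij in \<open>auto simp: min_def max_def\<close>)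
        then have EC0: "0 < expected_edges (p n) C" using ppos by linarith
        have ECeq: "expected_edges (p n) C = pbar (p n) C * real (r n) * (real (r n) - 1) / 2"
          using pbar_eq[OF r2] cf by simp
        have EDeq: "expected_edges (p n) D = pbar (p n) D * real (card D) * (real (card D) - 1) / 2"
          using pbar_eq[OF d2] by simp
        have pC0: "0 < pbar (p n) C"
        proof -
          have "0 < real (r n) * (real (r n) - 1) / 2" using rr by simp
          then show ?thesis using EC0 ECeq by (simp add: zero_less_mult_iff zero_less_divide_iff)
        qed
        have rat: "real (card D) * pbar (p n) D / (real (card C) * pbar (p n) C) \<le> \<delta>"
          using small C DC d2 True by blast
        have dp: "real (card D) * pbar (p n) D \<le> \<delta> * real (r n) * pbar (p n) C"
          using rat cf(6) pC0 r0 by (simp add: divide_le_eq mult.assoc)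
        have X0': "0 < X" using X2 by simp
        have hC: "expected_edges (p n) C * hfun (rho n C - 1) / (real (card C) * ln (real n / real (card C))) \<le> 1 - \<epsilon>"
          using hyp C r2 by (metis card.empty not_numeral_le_zero order_refl)
        then have hC': "expected_edges (p n) C * hfun (rho n C - 1) \<le> (1-\<epsilon>) * (real (r n) * X)"
          using cf(6) Xeq X0' r0 by (simp add: divide_le_eq)
        have rho1: "1 < rho n C" using set C unfolding setting_def by blast
        define s where "s = rho n C - 1"
        have s0: "0 < s" using rho1 s_def by simp
        have h0: "0 \<le> hfun s" using hfun_mono[of 0 s] s0 hfun_0 by simp
        have iiiC: "1 / pbar (p n) C \<le> c0 * (real (r n) / X)" using elim C Xeq by simp
        have pCl: "X/(c0*real (r n)) \<le> pbar (p n) C"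
        proof -
          have "X * (1 / pbar (p n) C) \<le> X * (c0 * (real (r n) / X))" using iiiC X0' by (intro mult_left_mono) auto
          then have "X / pbar (p n) C \<le> c0 * real (r n)" using X0' by simp
          then have "X \<le> c0 * real (r n) * pbar (p n) C" using pC0 by (simp add: divide_le_eq)
          then show ?thesis using c00 r0 by (simp add: divide_le_eq mult.commute mult.left_commute)
        qed
        have h4: "hfun s \<le> 4*c0"
          by (rule sbound[OF hC'[folded s_def] ECeq pCl rr X0' c00 h0 e])
        have sth: "s \<le> \<theta>"
        proof (rule ccontr)
          assume "\<not> s \<le> \<theta>"
          then have "hfun \<theta> \<le> hfun s" using th0 by (intro hfun_mono) auto
          then show False using h4 hth by linarith
        qed
        have cal: "(1-\<epsilon>/2)*real (card D)*Mv n (r n) D < s^2*expected_edges (p n) D"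
          using D unfolding calE_def Mv_def s_def by simp
        have "(1-\<epsilon>/2)*Mv n (r n) D < \<delta>*(2+\<theta>)*(1-\<epsilon>)*X"
          by (rule small_contra[OF dl(1) e s0 sth hfun_lower[OF less_imp_le[OF s0]] _ _ X0' ECeq EDeq pC0 dp hC'[folded s_def] cal])
             (use d2 dr in auto)
        moreover have "\<delta>*(2+\<theta>)*(1-\<epsilon>)*X \<le> (1-\<epsilon>/2)*(N - 2*u - ln X)"
        proof -
          have A: "\<delta>*(2+(1/2-\<delta>))*(1-\<epsilon>)*(N-u) \<le> (1-\<epsilon>/2)*(N - 2*u - ln X)"
            by (rule asym11[OF dl e _ u_le k0 b0 bN big]) (use N1 in simp)
          have "N - u = X" by (simp add: X_def)
          then show ?thesis using A unfolding \<theta>_def by simp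
        qed
        moreover have "(1-\<epsilon>/2)*(N - 2*u - ln X) \<le> (1-\<epsilon>/2)*Mv n (r n) D"
          unfolding M using ld e by (intro mult_left_mono) auto
        ultimately show ?thesis by linarith
      next
        case False
        have nr: "0 < real n / real (r n)" using n0 r0 by simp
        have "ln (real (r n) / (real n / real (r n)) powr \<gamma> n) \<le> ld"
        proof -
          have "0 < (real n / real (r n)) powr \<gamma> n" using nr n0 r0 by simp
          then have "0 < real (r n) / (real n / real (r n)) powr \<gamma> n" using r0 by simp
          then show ?thesis unfolding ld_def using False d1 by (subst ln_le_cancel_iff) auto
        qed
        moreover have "ln (real (r n) / (real n / real (r n)) powr \<gamma> n) = u - \<gamma> n * X"
        proof -
          have P: "0 < (real n / real (r n)) powr \<gamma> n" using nr n0 r0 by simp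
          have "ln (real (r n) / (real n / real (r n)) powr \<gamma> n) = ln (real (r n)) - ln ((real n / real (r n)) powr \<gamma> n)"
            using P r0 by (simp add: ln_div)
          also have "ln ((real n / real (r n)) powr \<gamma> n) = \<gamma> n * ln (real n / real (r n))" by (rule ln_powr)
          finally show ?thesis unfolding u_def Xeq .
        qed
        ultimately have ldg: "u - \<gamma> n * X \<le> ld" by simp
        have "\<gamma> n * X \<le> 1/20 * X" using elim X2 by (intro mult_right_mono) auto
        then have gX: "\<gamma> n * X \<le> X/20" by simp
        have bX: "ln X \<le> X/4" using X0[OF X2(2)] by simp
        show ?thesis by (rule large_ok[OF ldg gX X_def M L bX])
      qed
      show "0 < expected_edges (p n) D \<and> 0 \<le> Mv n (r n) D \<and> Lv n D \<le> 3/2 * Mv n (r n) D"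
        using E0 M0 LM by simp
    qed
  qed
qed



theorem lemma3:
  fixes p :: "nat \<Rightarrow> nat \<Rightarrow> nat \<Rightarrow> real"
    and r :: "nat \<Rightarrow> nat"
    and rho :: "nat \<Rightarrow> nat set \<Rightarrow> real"
    and \<epsilon> :: real
  assumes eps: "0 < \<epsilon>" "\<epsilon> < 1"
    and set: "setting p r rho"
    and A2: "assumption_2 p r rho"
    and A1: "assumption_1_1 p r \<or> assumption_1_2 p r"
    and hyp: "\<forall>n. \<forall>C\<in>communities n (r n). \<forall>D. D \<subseteq> C \<and> D \<noteq> {} \<longrightarrow>
        expected_edges (p n) D * hfun (rho n C - 1) / (real (card D) * ln (real n / real (card D)))
          \<le> 1 - \<epsilon>"
  shows "\<forall>\<^sub>F n in sequentially. \<forall>C\<in>communities n (r n). \<forall>D\<in>calE n (r n) (p n) (rho n C) \<epsilon> C.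
      (\<exists>!c::real. 1 \<le> c \<and>
          (1 + \<epsilon>) * expected_edges (p n) D * hfun (c - 1) = real (card D) * ln (real n / real (card D))) \<and>
      (\<forall>c::real. 1 \<le> c \<and>
          (1 + \<epsilon>) * expected_edges (p n) D * hfun (c - 1) = real (card D) * ln (real n / real (card D))
        \<longrightarrow> (\<forall>i\<in>D. \<forall>j\<in>D. i \<noteq> j \<longrightarrow>
              theta (p n) i j (c * p n i j) \<le> 2 * theta (p n) i j (rho n C * p n i j)))"
proof -
  have G: "eventually (\<lambda>n. Good p r rho \<epsilon> n) sequentially"
    using A1 good11[OF set _ eps hyp] good12[OF set _ eps] by blast
  have E2: "\<forall>\<^sub>F n in sequentially. \<forall>C\<in>communities n (r n).
        \<forall>i\<in>C. \<forall>j\<in>C. i \<noteq> j \<longrightarrow> (rho n C)^2 * p n i j \<le> 1/10"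
  proof -
    have "\<forall>c>0. \<forall>\<^sub>F n in sequentially. \<forall>C\<in>communities n (r n).
        \<forall>i\<in>C. \<forall>j\<in>C. i \<noteq> j \<longrightarrow> (rho n C)^2 * p n i j \<le> c"
      using A2 unfolding assumption_2_def by blast
    moreover have "(1/10::real) > 0" by simp
    ultimately show ?thesis by blast
  qed
  show ?thesis using G E2
  proof eventually_elim
    case (elim n)
    show ?case
    proof (intro ballI)
      fix C D assume C: "C \<in> communities n (r n)" and D: "D \<in> calE n (r n) (p n) (rho n C) \<epsilon> C"
      have DC: "D \<subseteq> C" using D by (simp add: calE_def)
      note cf = comm_facts[OF C DC]
      have gd: "0 < expected_edges (p n) D" "0 \<le> Mv n (r n) D" "Lv n D \<le> 3/2 * Mv n (r n) D"
        using elim C D unfolding Good_def by auto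
      have rho1: "1 < rho n C" using set C unfolding setting_def by blast
      have "D \<noteq> {}" using calE_ne[OF D] .
      then have d1: "1 \<le> card D" using cf(1) by (simp add: Suc_le_eq card_gt_0_iff)
      have dn: "real (card D) \<le> real n" using cf by simp
      have L0: "0 \<le> ln (real n / real (card D))" using d1 dn by simp
      have cal: "(1-\<epsilon>/2)*real (card D)*Mv n (r n) D < (rho n C - 1)^2*expected_edges (p n) D"
        using D unfolding calE_def Mv_def by simp
      have co: "(\<exists>!c. 1 \<le> c \<and> (1+\<epsilon>)*expected_edges (p n) D*hfun(c-1) = real (card D)*Lv n D) \<and>
         (\<forall>c. 1 \<le> c \<and> (1+\<epsilon>)*expected_edges (p n) D*hfun(c-1) = real (card D)*Lv n D \<longrightarrow> c \<le> (1 + 9/10*(rho n C - 1))^2)"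
        by (rule core[OF eps _ gd(1) _ _ gd(2) cal gd(3)]) (use rho1 L0 in \<open>auto simp: Lv_def\<close>)
      show "(\<exists>!c::real. 1 \<le> c \<and>
          (1 + \<epsilon>) * expected_edges (p n) D * hfun (c - 1) = real (card D) * ln (real n / real (card D))) \<and>
      (\<forall>c::real. 1 \<le> c \<and>
          (1 + \<epsilon>) * expected_edges (p n) D * hfun (c - 1) = real (card D) * ln (real n / real (card D))
        \<longrightarrow> (\<forall>i\<in>D. \<forall>j\<in>D. i \<noteq> j \<longrightarrow>
              theta (p n) i j (c * p n i j) \<le> 2 * theta (p n) i j (rho n C * p n i j)))"
      proof (intro conjI allI impI ballI)
        show "\<exists>!c::real. 1 \<le> c \<and>
          (1 + \<epsilon>) * expected_edges (p n) D * hfun (c - 1) = real (card D) * ln (real n / real (card D))"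
          using co unfolding Lv_def by blast
      next
        fix c :: real and i j
        assume c: "1 \<le> c \<and> (1 + \<epsilon>) * expected_edges (p n) D * hfun (c - 1) = real (card D) * ln (real n / real (card D))"
          and ij: "i \<in> D" "j \<in> D" "i \<noteq> j"
        have cb: "c \<le> (1 + 9/10*(rho n C - 1))^2" using co c unfolding Lv_def by blast
        have ijn: "i \<in> {1..n}" "j \<in> {1..n}" using ij cf(4) by auto
        have p0: "0 < p n i j" using set ijn ij(3) unfolding setting_def by blast
        have rp: "(rho n C)^2 * p n i j \<le> 1/10" using elim C ij DC by blast
        show "theta (p n) i j (c * p n i j) \<le> 2 * theta (p n) i j (rho n C * p n i j)"
          unfolding theta_def using theta_bound[OF p0 rho1 rp _ cb] c by simp
      qed
    qed
  qed
qed

end
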